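(* Let $H:\mathbb{D}\times\mathbb{D}\to\Omega_1$, $H(z,w)=\left(\frac{z-w}{1-zw},\,-i\frac{z+w}{1-zw}\right)$ (a biholomorphism), let $F:\mathbb{G}\to\mathcal{D}_1$, $F(s,p)=\left(i\frac{1+p}{1-p},\,-i\frac{s}{1-p}\right)$ (a biholomorphism), and let $sym:\mathbb{D}\times\mathbb{D}\to\mathbb{G}$, $sym(z_1,z_2)=(z_1+z_2,z_1z_2)$. Then there is a proper holomorphic map $sym_{\Omega_1}:\Omega_1\to\mathcal{D}_1$ such that $sym_{\Omega_1}\circ H=F\circ sym$ on $\mathbb{D}\times\mathbb{D}$.
   Context: $\mathbb{D}$ is the open unit disc in $\mathbb{C}$. $\mathbb{G}=\{(z_1+z_2,z_1z_2):z_1,z_2\in\mathbb{D}\}$. $\Omega_1=\{(u,v)\in\mathbb{C}^2: |u^2|+|v^2|-1<|u^2+v^2-1|\}$. $\mathcal{D}_1=\{(z_1,z_2)\in\mathbb{C}^2: 1+|z_1|^2-|z_2|^2>|1+z_1^2-z_2^2|,\ \mathrm{Im}(z_1(1+\overline{z_2}))>0\}$. *)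

theory Defs
  imports "HOL-Analysis.Analysis"
begin

definition holomorphic2_on ::
  "(complex \<times> complex \<Rightarrow> complex \<times> complex) \<Rightarrow> (complex \<times> complex) set \<Rightarrow> bool" where
  "holomorphic2_on f S \<longleftrightarrow>
     (\<forall>x\<in>S. \<exists>f'. (f has_derivative f') (at x) \<and>
        (\<forall>c a b. f' (c * a, c * b) = (c * fst (f' (a, b)), c * snd (f' (a, b)))))"

definition proper_map_on :: "('a::topological_space \<Rightarrow> 'b::topological_space) \<Rightarrow> 'a set \<Rightarrow> 'b set \<Rightarrow> bool" where
  "proper_map_on f A B \<longleftrightarrow> f ` A \<subseteq> B \<and>
     (\<forall>K. K \<subseteq> B \<and> compact K \<longrightarrow> compact {x\<in>A. f x \<in> K})"

definition unit_disc :: "complex set" where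
  "unit_disc = {z. norm z < 1}"

definition symmetrized_bidisc :: "(complex \<times> complex) set" where
  "symmetrized_bidisc = {(z1 + z2, z1 * z2) | z1 z2. z1 \<in> unit_disc \<and> z2 \<in> unit_disc}"

definition Omega1 :: "(complex \<times> complex) set" where
  "Omega1 = {(u, v). norm (u\<^sup>2) + norm (v\<^sup>2) - 1 < norm (u\<^sup>2 + v\<^sup>2 - 1)}"

definition D1 :: "(complex \<times> complex) set" where
  "D1 = {(z1, z2). 1 + (norm z1)\<^sup>2 - (norm z2)\<^sup>2 > norm (1 + z1\<^sup>2 - z2\<^sup>2)
                   \<and> Im (z1 * (1 + cnj z2)) > 0}"

definition Hmap :: "complex \<times> complex \<Rightarrow> complex \<times> complex" where
  "Hmap = (\<lambda>(z, w). ((z - w) / (1 - z * w), - \<i> * ((z + w) / (1 - z * w))))"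

definition Fmap :: "complex \<times> complex \<Rightarrow> complex \<times> complex" where
  "Fmap = (\<lambda>(s, p). (\<i> * ((1 + p) / (1 - p)), - \<i> * (s / (1 - p))))"

definition symmap :: "complex \<times> complex \<Rightarrow> complex \<times> complex" where
  "symmap = (\<lambda>(z1, z2). (z1 + z2, z1 * z2))"

end

theory Submission
  imports Defs
begin

lemma key_identity:
  fixes s v :: complex
  shows "(1 + (cmod s)^2 - (cmod v)^2)^2 - (cmod (1 - s^2 - v^2))^2
         = 4*((Re s)^2 - (Im v)^2 - (Re (s * cnj v))^2)"
proof -
  obtain a b where s: "s = Complex a b" by (metis complex_surj)
  obtain c d where v: "v = Complex c d" by (metis complex_surj)
  have e: "1 - s^2 - v^2 = Complex (1 - a^2 + b^2 - c^2 + d^2) (- 2*a*b - 2*c*d)"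
    unfolding s v by (simp add: power2_eq_square Complex_eq algebra_simps)
  show ?thesis unfolding e apply (simp only: cmod_power2)
    unfolding s v by (simp add: power2_eq_square algebra_simps)
qed

lemma cond1_iff:
  fixes s v :: complex
  shows "cmod (1 - s^2 - v^2) < 1 + (cmod s)^2 - (cmod v)^2 \<longleftrightarrow>
         0 < 1 + (cmod s)^2 - (cmod v)^2 \<and> (Im v)^2 + (Re (s * cnj v))^2 < (Re s)^2"
proof -
  define A where "A = 1 + (cmod s)^2 - (cmod v)^2"
  define B where "B = cmod (1 - s^2 - v^2)"
  have B0: "0 \<le> B" unfolding B_def by simp
  have "B < A \<longleftrightarrow> 0 < A \<and> B^2 < A^2"
    using B0 by (smt (verit) power_less_imp_less_base power_strict_mono zero_less_power2 pos2)
  moreover have "B^2 < A^2 \<longleftrightarrow> (Im v)^2 + (Re (s * cnj v))^2 < (Re s)^2"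
    using key_identity[of s v] unfolding A_def B_def by (smt (verit))
  ultimately show ?thesis unfolding A_def B_def by blast
qed

lemma cond1_Re:
  fixes s v :: complex
  assumes "cmod (1 - s^2 - v^2) < 1 + (cmod s)^2 - (cmod v)^2"
  shows "\<bar>Re (s * cnj v)\<bar> < \<bar>Re s\<bar>"
proof -
  have "(Re (s * cnj v))^2 < (Re s)^2" using assms cond1_iff[of s v]
    by (smt (verit) zero_le_power2)
  thus ?thesis by (metis abs_ge_zero power2_abs power_less_imp_less_base)
qed

lemma D1_iff:
  fixes s v :: complex
  shows "(\<i> * s, v) \<in> D1 \<longleftrightarrow> cmod (1 - s^2 - v^2) < 1 + (cmod s)^2 - (cmod v)^2
           \<and> 0 < Re s + Re (s * cnj v)"
proof -
  have "(\<i> * s)^2 = - (s^2)" by (simp add: power_mult_distrib)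
  moreover have "cmod (\<i> * s) = cmod s" by (simp add: norm_mult)
  moreover have "Im (\<i> * s * (1 + cnj v)) = Re s + Re (s * cnj v)"
    by (simp add: algebra_simps)
  ultimately show ?thesis unfolding D1_def by (simp add: algebra_simps) (smt (verit))
qed

lemma D1_Re_pos:
  assumes "(\<i> * s, v) \<in> D1"
  shows "0 < Re s"
  using D1_iff[of s v] assms cond1_Re[of s v] by auto

lemma D1_intro:
  assumes "cmod (1 - s^2 - v^2) < 1 + (cmod s)^2 - (cmod v)^2" "0 < Re s"
  shows "(\<i> * s, v) \<in> D1"
  using D1_iff[of s v] assms cond1_Re[of s v] by auto

lemma Omega1_iff:
  fixes u v :: complex
  assumes "s^2 = 1 - u^2 - v^2"
  shows "(u, v) \<in> Omega1 \<longleftrightarrow> cmod (1 - s^2 - v^2) < 1 + (cmod s)^2 - (cmod v)^2"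
proof -
  have "u^2 = 1 - s^2 - v^2" using assms by simp
  hence 1: "cmod (u^2) = cmod (1 - s^2 - v^2)" by simp
  have "u^2 + v^2 - 1 = - (s^2)" using assms by simp
  hence 2: "cmod (u^2 + v^2 - 1) = (cmod s)^2" by (simp add: norm_power)
  have 3: "cmod (v^2) = (cmod v)^2" by (simp add: norm_power)
  have "(u, v) \<in> Omega1 \<longleftrightarrow> cmod (u^2) + cmod (v^2) - 1 < cmod (u^2 + v^2 - 1)"
    unfolding Omega1_def by simp
  thus ?thesis unfolding 1 2 3 by linarith
qed

lemma csqrt_pos_notin:
  assumes "0 < Re (csqrt z)"
  shows "z \<notin> \<real>\<^sub>\<le>\<^sub>0"
proof
  assume "z \<in> \<real>\<^sub>\<le>\<^sub>0"
  hence z: "Re z \<le> 0" "Im z = 0" by (auto simp: complex_nonpos_Reals_iff)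
  define s where "s = csqrt z"
  have sz: "s^2 = z" unfolding s_def by simp
  have "Im (s^2) = 2 * Re s * Im s" by (simp add: power2_eq_square)
  hence "Im s = 0" using z assms sz s_def by simp
  hence "Re z = (Re s)^2" using sz by (simp add: power2_eq_square flip: sz)
  thus False using z assms s_def by (smt (verit) zero_less_power2)
qed

lemma Omega1_props:
  assumes "(u, v) \<in> Omega1"
  shows "cmod (1 - (csqrt (1 - u^2 - v^2))^2 - v^2) < 1 + (cmod (csqrt (1 - u^2 - v^2)))^2 - (cmod v)^2"
    and "0 < Re (csqrt (1 - u^2 - v^2))"
proof -
  let ?s = "csqrt (1 - u^2 - v^2)"
  show c: "cmod (1 - ?s^2 - v^2) < 1 + (cmod ?s)^2 - (cmod v)^2"
    using Omega1_iff[of ?s u v] assms by simp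
  have "\<bar>Re (?s * cnj v)\<bar> < \<bar>Re ?s\<bar>" using cond1_Re[OF c] .
  thus "0 < Re ?s" using Re_csqrt[of "1 - u^2 - v^2"] by linarith
qed

lemma Re_cayley_pos:
  fixes p :: complex
  assumes "cmod p < 1"
  shows "0 < Re ((1 + p) / (1 - p))"
proof -
  have ne: "1 - p \<noteq> 0" using assms by auto
  have "(Re p)^2 + (Im p)^2 < 1" using assms
    by (metis cmod_power2 norm_ge_zero power_less_one_iff power_strict_mono one_power2 pos2 abs_of_nonneg) 
  hence num: "0 < (1 + Re p) * (1 - Re p) - Im p * Im p" by (simp add: power2_eq_square algebra_simps)
  have "0 < (cmod (1 - p))^2" using ne by simp
  thus ?thesis unfolding Re_divide' using num by simp
qed

definition gmap :: "complex \<times> complex \<Rightarrow> complex \<times> complex" where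
  "gmap = (\<lambda>(u, v). (\<i> * csqrt (1 - u^2 - v^2), v))"

lemma gmap_ident:
  assumes "z \<in> unit_disc" "w \<in> unit_disc"
  shows "gmap (Hmap (z, w)) = Fmap (symmap (z, w))"
proof -
  have p: "cmod (z * w) < 1" using assms unfolding unit_disc_def
    by (simp add: norm_mult) (metis mult_strict_mono' norm_ge_zero mult_1_right)
  hence ne: "1 - z * w \<noteq> 0" by auto
  have e: "1 - ((z - w) / (1 - z * w))^2 - (- \<i> * ((z + w) / (1 - z * w)))^2
         = ((1 + z * w) / (1 - z * w))^2"
  proof -
    define d where "d = 1 - z * w"
    have d: "d \<noteq> 0" using ne d_def by simp
    have "1 - ((z - w) / d)^2 - (- \<i> * ((z + w) / d))^2 = (d^2 - (z - w)^2 + (z + w)^2) / d^2"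
      using d by (simp add: power_mult_distrib power_divide) (simp add: field_simps)
    also have "d^2 - (z - w)^2 + (z + w)^2 = (1 + z * w)^2" unfolding d_def by algebra
    finally show ?thesis unfolding d_def by (simp add: power_divide)
  qed
  have c: "csqrt (((1 + z * w) / (1 - z * w))^2) = (1 + z * w) / (1 - z * w)"
    by (rule csqrt_unique) (use Re_cayley_pos[OF p] in auto)
  show ?thesis unfolding gmap_def Hmap_def Fmap_def symmap_def using e c by simp
qed

lemma gmap_into: "x \<in> Omega1 \<Longrightarrow> gmap x \<in> D1"
proof -
  assume x: "x \<in> Omega1"
  obtain u v where uv: "x = (u, v)" by fastforce
  show ?thesis using Omega1_props[of u v] x uv D1_intro unfolding gmap_def by simp
qed

lemma gmap_preimage:
  assumes K: "K \<subseteq> D1" "compact K"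
  shows "compact {x\<in>Omega1. gmap x \<in> K}"
proof -
  define q where "q = (\<lambda>(u::complex, v::complex). (1 - u^2 - v^2, v))"
  define K' where "K' = (\<lambda>(a::complex, b::complex). (- (a^2), b)) ` K"
  have cq: "continuous_on UNIV q" unfolding q_def by (auto intro!: continuous_intros simp: case_prod_unfold)
  have cK': "compact K'" unfolding K'_def
    by (rule compact_continuous_image) (auto intro!: continuous_intros simp: case_prod_unfold K)
  have eq: "{x\<in>Omega1. gmap x \<in> K} = q -` K'"
  proof (intro equalityI subsetI)
    fix x assume x: "x \<in> {x\<in>Omega1. gmap x \<in> K}"
    obtain u v where uv: "x = (u, v)" by fastforce
    let ?s = "csqrt (1 - u^2 - v^2)"
    have "(\<i> * ?s, v) \<in> K" using x uv unfolding gmap_def by simp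
    moreover have "q x = (- ((\<i> * ?s)^2), v)" unfolding q_def uv by (simp add: power_mult_distrib)
    ultimately show "x \<in> q -` K'" unfolding K'_def by force
  next
    fix x assume x: "x \<in> q -` K'"
    obtain u v where uv: "x = (u, v)" by fastforce
    obtain a b where ab: "(a, b) \<in> K" "q x = (- (a^2), b)" using x unfolding K'_def by auto
    define t where "t = - \<i> * a"
    have a: "a = \<i> * t" unfolding t_def by simp
    have vb: "v = b" and tq: "1 - u^2 - v^2 = t^2" using ab(2) unfolding q_def uv a
      by (auto simp: power_mult_distrib)
    have D: "(\<i> * t, v) \<in> D1" using ab(1) K(1) a vb by auto
    have tpos: "0 < Re t" using D1_Re_pos[OF D] .
    have c1: "cmod (1 - t^2 - v^2) < 1 + (cmod t)^2 - (cmod v)^2"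
      using D D1_iff by blast
    have om: "(u, v) \<in> Omega1" using Omega1_iff[of t u v] tq c1 by simp
    have cs: "csqrt (1 - u^2 - v^2) = t" unfolding tq by (rule csqrt_unique) (use tpos in auto)
    have "gmap x = (a, b)" unfolding gmap_def uv using cs a vb by simp
    thus "x \<in> {x\<in>Omega1. gmap x \<in> K}" using om uv ab(1) by simp
  qed
  have closed: "closed (q -` K')"
  proof -
    have "\<And>x. isCont q x" using cq continuous_on_eq_continuous_at open_UNIV by blast
    thus ?thesis using continuous_closed_vimage[of K' q] compact_imp_closed[OF cK'] by blast
  qed
  obtain B where B: "\<And>y. y \<in> K \<Longrightarrow> norm y \<le> B"
    using compact_imp_bounded[OF K(2)] bounded_iff by blast
  have bnd: "bounded (q -` K')"
    unfolding bounded_iff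
  proof (intro exI ballI)
    fix x assume x: "x \<in> q -` K'"
    obtain u v where uv: "x = (u, v)" by fastforce
    obtain a b where ab: "(a, b) \<in> K" "q x = (- (a^2), b)" using x unfolding K'_def by auto
    have nab: "cmod a \<le> B" "cmod b \<le> B"
      using B[OF ab(1)] norm_fst_le[of a b] norm_snd_le[of b a] by linarith+
    hence vb: "v = b" and u2: "u^2 = 1 - b^2 + a^2" using ab(2) unfolding q_def uv
      by (auto simp: algebra_simps)
    have t1: "cmod (1 - b^2 + a^2) \<le> cmod (1 - b^2) + cmod (a^2)" by (rule norm_triangle_ineq)
    have t2: "cmod (1 - b^2) \<le> 1 + cmod (b^2)" using norm_triangle_ineq4[of 1 "b^2"] by simp
    have "cmod (u^2) \<le> 1 + cmod (b^2) + cmod (a^2)" unfolding u2 using t1 t2 by linarith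
    also have "\<dots> \<le> 1 + B^2 + B^2"
      using power_mono[OF nab(1), of 2] power_mono[OF nab(2), of 2] by (simp add: norm_power)
    finally have u2b: "(cmod u)^2 \<le> 1 + 2 * B^2" by (simp add: norm_power)
    have "2 * cmod u \<le> 1 + (cmod u)^2"
      using zero_le_power2[of "cmod u - 1"] by (simp add: power2_eq_square algebra_simps)
    hence "cmod u \<le> 1 + (cmod u)^2" using norm_ge_zero[of u] zero_le_power2[of "cmod u"] by linarith
    have "norm x \<le> cmod u + cmod v" unfolding uv norm_Pair by (simp add: sqrt_sum_squares_le_sum)
    moreover have "cmod v \<le> B" using vb nab by simp
    ultimately show "norm x \<le> 2 + 2 * B^2 + B" using u2b \<open>cmod u \<le> 1 + (cmod u)^2\<close> by linarith
  qed
  show ?thesis unfolding eq using closed bnd by (simp add: compact_eq_bounded_closed)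
qed

lemma gmap_deriv:
  assumes x: "(u, v) \<in> Omega1"
  shows "\<exists>f'. (gmap has_derivative f') (at (u, v)) \<and>
        (\<forall>c a b. f' (c * a, c * b) = (c * fst (f' (a, b)), c * snd (f' (a, b))))"
proof -
  define z0 where "z0 = 1 - u^2 - v^2"
  have nz: "z0 \<notin> \<real>\<^sub>\<le>\<^sub>0" unfolding z0_def by (rule csqrt_pos_notin) (rule Omega1_props(2)[OF x])
  define D where "D = inverse (2 * csqrt z0)"
  have hd: "((\<lambda>x::complex\<times>complex. 1 - (fst x)^2 - (snd x)^2) has_derivative
           (\<lambda>k. - (2 * u * fst k) - 2 * v * snd k)) (at (u, v))"
    by (auto intro!: derivative_eq_intros simp: algebra_simps)
  have cd: "(csqrt has_derivative (\<lambda>y. D * y)) (at z0)"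
    using has_field_derivative_csqrt[OF nz, folded D_def] unfolding has_field_derivative_def
    by simp
  have comp: "((\<lambda>x::complex\<times>complex. csqrt (1 - (fst x)^2 - (snd x)^2)) has_derivative
           (\<lambda>k. D * (- (2 * u * fst k) - 2 * v * snd k))) (at (u, v))"
    using has_derivative_compose[OF hd, of csqrt] cd unfolding z0_def by simp
  have g: "gmap = (\<lambda>x. (\<i> * csqrt (1 - (fst x)^2 - (snd x)^2), snd x))"
    unfolding gmap_def by (auto simp: case_prod_unfold)
  have "(gmap has_derivative (\<lambda>k. (\<i> * (D * (- (2 * u * fst k) - 2 * v * snd k)), snd k))) (at (u, v))"
    unfolding g by (intro has_derivative_Pair has_derivative_mult_right comp has_derivative_snd)
      (auto intro: has_derivative_ident)
  thus ?thesis by (intro exI[of _ "(\<lambda>k. (\<i> * (D * (- (2 * u * fst k) - 2 * v * snd k)), snd k))"])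
    (simp add: algebra_simps)
qed

theorem theorem4p7:
  shows "\<exists>g. holomorphic2_on g Omega1 \<and> proper_map_on g Omega1 D1 \<and>
           (\<forall>z\<in>unit_disc. \<forall>w\<in>unit_disc. g (Hmap (z, w)) = Fmap (symmap (z, w)))"
proof (intro exI[of _ gmap] conjI ballI)
  show "holomorphic2_on gmap Omega1" unfolding holomorphic2_on_def
    using gmap_deriv by fastforce
  show "proper_map_on gmap Omega1 D1" unfolding proper_map_on_def
    using gmap_into gmap_preimage by blast
qed (rule gmap_ident)

end
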